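(* Let $P$ be a poset, let $\alpha\ge2$ be a cardinal, and let $\mathcal{U}$ be a join-specification for $P$ with $\mathcal{U}\subseteq\mathcal{U}_\alpha\subseteq\mathcal{U}^+$. Suppose that for all $p\in P$ and $T\in\mathcal{U}$, whenever $p\wedge\bigvee T$ is defined in $P$, the join $\bigvee_{t\in T}(p\wedge t)$ is also defined in $P$ and $p\wedge\bigvee T=\bigvee_{t\in T}(p\wedge t)$. Then $\mathcal{I}_{\mathcal{U}}$ is a frame.
   Context: A join-specification for $P$ is a set $\mathcal{U}\subseteq\wp(P)$ such that $\bigvee S$ exists in $P$ for every $S\in\mathcal{U}$ and $\{p\}\in\mathcal{U}$ for every $p\in P$. A $\mathcal{U}$-ideal is a down-closed $C\subseteq P$ with $\bigvee S\in C$ whenever $S\in\mathcal{U}$, $S\subseteq C$; $\mathcal{I}_{\mathcal{U}}$ is the complete lattice of $\mathcal{U}$-ideals under inclusion; $\Gamma_{\mathcal{U}}(S)$ is the smallest $\mathcal{U}$-ideal containing $S$. $\mathcal{U}^+=\{S\subseteq P:\bigvee S\text{ exists and }\bigvee S\in\Gamma_{\mathcal{U}}(S)\}$. $\mathcal{U}_\alpha=\{S\subseteq P:S\neq\emptyset,\ |S|<\alpha,\ \bigvee S\text{ exists in }P\}$. *)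

theory Defs
  imports Main
begin

text \<open>The poset P is the universe of a type of class order.\<close>

definition is_join :: "'a::order set \<Rightarrow> 'a \<Rightarrow> bool" where
  "is_join S x \<longleftrightarrow> (\<forall>s\<in>S. s \<le> x) \<and> (\<forall>y. (\<forall>s\<in>S. s \<le> y) \<longrightarrow> x \<le> y)"

definition has_join :: "'a::order set \<Rightarrow> bool" where
  "has_join S \<longleftrightarrow> (\<exists>x. is_join S x)"

definition join :: "'a::order set \<Rightarrow> 'a" where
  "join S = (THE x. is_join S x)"

definition is_meet2 :: "'a::order \<Rightarrow> 'a \<Rightarrow> 'a \<Rightarrow> bool" where
  "is_meet2 p q x \<longleftrightarrow> x \<le> p \<and> x \<le> q \<and> (\<forall>y. y \<le> p \<and> y \<le> q \<longrightarrow> y \<le> x)"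

definition has_meet2 :: "'a::order \<Rightarrow> 'a \<Rightarrow> bool" where
  "has_meet2 p q \<longleftrightarrow> (\<exists>x. is_meet2 p q x)"

definition meet2 :: "'a::order \<Rightarrow> 'a \<Rightarrow> 'a" where
  "meet2 p q = (THE x. is_meet2 p q x)"

definition join_spec :: "'a::order set set \<Rightarrow> bool" where
  "join_spec U \<longleftrightarrow> (\<forall>S\<in>U. has_join S) \<and> (\<forall>p. {p} \<in> U)"

definition U_ideal :: "'a::order set set \<Rightarrow> 'a set \<Rightarrow> bool" where
  "U_ideal U C \<longleftrightarrow> (\<forall>x y. x \<in> C \<longrightarrow> y \<le> x \<longrightarrow> y \<in> C) \<and>
                    (\<forall>S\<in>U. S \<subseteq> C \<longrightarrow> join S \<in> C)"

definition U_ideals :: "'a::order set set \<Rightarrow> 'a set set" where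
  "U_ideals U = {C. U_ideal U C}"

definition Gamma :: "'a::order set set \<Rightarrow> 'a set \<Rightarrow> 'a set" where
  "Gamma U S = \<Inter>{C. U_ideal U C \<and> S \<subseteq> C}"

definition U_plus :: "'a::order set set \<Rightarrow> 'a set set" where
  "U_plus U = {S. has_join S \<and> join S \<in> Gamma U S}"

text \<open>The cardinal alpha is represented by a cardinal order relation; |S| < alpha.\<close>
definition U_alpha :: "'b rel \<Rightarrow> 'a::order set set" where
  "U_alpha alpha = {S. S \<noteq> {} \<and> (card_of S, alpha) \<in> ordLess \<and> has_join S}"

definition lub_in :: "'x set \<Rightarrow> ('x \<Rightarrow> 'x \<Rightarrow> bool) \<Rightarrow> 'x set \<Rightarrow> 'x \<Rightarrow> bool" where
  "lub_in L le F x \<longleftrightarrow> x \<in> L \<and> (\<forall>y\<in>F. le y x) \<and> (\<forall>z\<in>L. (\<forall>y\<in>F. le y z) \<longrightarrow> le x z)"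

definition glb_in :: "'x set \<Rightarrow> ('x \<Rightarrow> 'x \<Rightarrow> bool) \<Rightarrow> 'x set \<Rightarrow> 'x \<Rightarrow> bool" where
  "glb_in L le F x \<longleftrightarrow> x \<in> L \<and> (\<forall>y\<in>F. le x y) \<and> (\<forall>z\<in>L. (\<forall>y\<in>F. le z y) \<longrightarrow> le z x)"

definition lub_of :: "'x set \<Rightarrow> ('x \<Rightarrow> 'x \<Rightarrow> bool) \<Rightarrow> 'x set \<Rightarrow> 'x" where
  "lub_of L le F = (THE x. lub_in L le F x)"

definition glb_of :: "'x set \<Rightarrow> ('x \<Rightarrow> 'x \<Rightarrow> bool) \<Rightarrow> 'x set \<Rightarrow> 'x" where
  "glb_of L le F = (THE x. glb_in L le F x)"

definition frame :: "'x set \<Rightarrow> ('x \<Rightarrow> 'x \<Rightarrow> bool) \<Rightarrow> bool" where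
  "frame L le \<longleftrightarrow>
     (\<forall>a\<in>L. le a a) \<and>
     (\<forall>a\<in>L. \<forall>b\<in>L. \<forall>c\<in>L. le a b \<longrightarrow> le b c \<longrightarrow> le a c) \<and>
     (\<forall>a\<in>L. \<forall>b\<in>L. le a b \<longrightarrow> le b a \<longrightarrow> a = b) \<and>
     (\<forall>F. F \<subseteq> L \<longrightarrow> (\<exists>x. lub_in L le F x)) \<and>
     (\<forall>a\<in>L. \<forall>F. F \<subseteq> L \<longrightarrow>
        glb_of L le {a, lub_of L le F} = lub_of L le ((\<lambda>b. glb_of L le {a, b}) ` F))"

end

theory Submission
  imports Defs
begin

lemma ideal_Inter: "(\<And>C. C \<in> K \<Longrightarrow> U_ideal U C) \<Longrightarrow> U_ideal U (\<Inter>K)"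
  unfolding U_ideal_def by blast

lemma Gamma_ideal: "U_ideal U (Gamma U S)"
  unfolding Gamma_def by (rule ideal_Inter) auto

lemma Gamma_sub: "S \<subseteq> Gamma U S"
  unfolding Gamma_def by auto

lemma Gamma_least: "U_ideal U C \<Longrightarrow> S \<subseteq> C \<Longrightarrow> Gamma U S \<subseteq> C"
  unfolding Gamma_def by auto

lemma lub_unique: "lub_in L (\<subseteq>) F x \<Longrightarrow> lub_of L (\<subseteq>) F = x"
  unfolding lub_of_def
proof (rule the_equality)
  fix y assume a: "lub_in L (\<subseteq>) F x" and b: "lub_in L (\<subseteq>) F y"
  from a have x: "x \<in> L" "\<forall>z\<in>F. z \<subseteq> x" "\<forall>z\<in>L. (\<forall>w\<in>F. w \<subseteq> z) \<longrightarrow> x \<subseteq> z"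
    unfolding lub_in_def by blast+
  from b have y: "y \<in> L" "\<forall>z\<in>F. z \<subseteq> y" "\<forall>z\<in>L. (\<forall>w\<in>F. w \<subseteq> z) \<longrightarrow> y \<subseteq> z"
    unfolding lub_in_def by blast+
  have "x \<subseteq> y" using x(3) y(1,2) by blast
  moreover have "y \<subseteq> x" using y(3) x(1,2) by blast
  ultimately show "y = x" by (rule equalityI[rotated])
qed

lemma glb_unique: "glb_in L (\<subseteq>) F x \<Longrightarrow> glb_of L (\<subseteq>) F = x"
  unfolding glb_of_def
proof (rule the_equality)
  fix y assume a: "glb_in L (\<subseteq>) F x" and b: "glb_in L (\<subseteq>) F y"
  from a have x: "x \<in> L" "\<forall>z\<in>F. x \<subseteq> z" "\<forall>z\<in>L. (\<forall>w\<in>F. z \<subseteq> w) \<longrightarrow> z \<subseteq> x"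
    unfolding glb_in_def by blast+
  from b have y: "y \<in> L" "\<forall>z\<in>F. y \<subseteq> z" "\<forall>z\<in>L. (\<forall>w\<in>F. z \<subseteq> w) \<longrightarrow> z \<subseteq> y"
    unfolding glb_in_def by blast+
  have "x \<subseteq> y" using y(3) x(1,2) by blast
  moreover have "y \<subseteq> x" using x(3) y(1,2) by blast
  ultimately show "y = x" by (rule equalityI[rotated])
qed

lemma lub_ideals: "F \<subseteq> U_ideals U \<Longrightarrow> lub_in (U_ideals U) (\<subseteq>) F (Gamma U (\<Union>F))"
proof -
  assume F: "F \<subseteq> U_ideals U"
  have 1: "Gamma U (\<Union>F) \<in> U_ideals U" using Gamma_ideal unfolding U_ideals_def by blast
  have 2: "\<forall>y\<in>F. y \<subseteq> Gamma U (\<Union>F)" using Gamma_sub by blast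
  have 3: "\<forall>z\<in>U_ideals U. (\<forall>y\<in>F. y \<subseteq> z) \<longrightarrow> Gamma U (\<Union>F) \<subseteq> z"
  proof (intro ballI impI)
    fix z assume "z \<in> U_ideals U" "\<forall>y\<in>F. y \<subseteq> z"
    then show "Gamma U (\<Union>F) \<subseteq> z" using Gamma_least[of U z "\<Union>F"] unfolding U_ideals_def by blast
  qed
  show ?thesis unfolding lub_in_def using 1 2 3 by blast
qed

lemma glb_ideals: "a \<in> U_ideals U \<Longrightarrow> b \<in> U_ideals U \<Longrightarrow> glb_in (U_ideals U) (\<subseteq>) {a,b} (a \<inter> b)"
  unfolding glb_in_def U_ideals_def
  using ideal_Inter[of "{a,b}" U] by auto

lemma meet2_eq: "is_meet2 p q x \<Longrightarrow> meet2 p q = x"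
  unfolding meet2_def
proof (rule the_equality)
  fix y assume a: "is_meet2 p q x" and b: "is_meet2 p q y"
  have "x \<le> y" using a b unfolding is_meet2_def by blast
  moreover have "y \<le> x" using a b unfolding is_meet2_def by blast
  ultimately show "y = x" by (rule order.antisym[rotated])
qed

lemma join_eq: "is_join S x \<Longrightarrow> join S = x"
  unfolding join_def
proof (rule the_equality)
  fix y assume a: "is_join S x" and b: "is_join S y"
  have "x \<le> y" using a b unfolding is_join_def by blast
  moreover have "y \<le> x" using a b unfolding is_join_def by blast
  ultimately show "y = x" by (rule order.antisym[rotated])
qed

lemma meet2_props: "has_meet2 p q \<Longrightarrow> meet2 p q \<le> p \<and> meet2 p q \<le> q"
proof -
  assume "has_meet2 p q"
  then obtain x where x: "is_meet2 p q x" unfolding has_meet2_def by blast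
  then have "meet2 p q = x" by (rule meet2_eq)
  with x show ?thesis by (simp add: is_meet2_def)
qed

theorem lemma3p13:
  fixes U :: "'a::order set set" and alpha :: "'b rel"
  assumes "Card_order alpha"
    and "(card_of (UNIV :: bool set), alpha) \<in> ordLeq"
    and "join_spec U"
    and "U \<subseteq> U_alpha alpha"
    and "U_alpha alpha \<subseteq> U_plus U"
    and "\<And>p T. T \<in> U \<Longrightarrow> has_meet2 p (join T) \<Longrightarrow>
           (\<forall>t\<in>T. has_meet2 p t) \<and> has_join ((\<lambda>t. meet2 p t) ` T) \<and>
           meet2 p (join T) = join ((\<lambda>t. meet2 p t) ` T)"
  shows "frame (U_ideals U) (\<subseteq>)"
proof -
  have dist: "A \<inter> Gamma U (\<Union>F) = Gamma U (\<Union>B\<in>F. A \<inter> B)"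
    if A: "A \<in> U_ideals U" and F: "F \<subseteq> U_ideals U" for A F
  proof
    define J where "J = Gamma U (\<Union>B\<in>F. A \<inter> B)"
    have AI: "U_ideal U A" using A by (simp add: U_ideals_def)
    have JI: "U_ideal U J" unfolding J_def by (rule Gamma_ideal)
    have AJ: "A \<inter> B \<subseteq> J" if "B \<in> F" for B
      using that Gamma_sub[of "\<Union>B\<in>F. A \<inter> B" U] unfolding J_def by blast
    show "Gamma U (\<Union>B\<in>F. A \<inter> B) \<subseteq> A \<inter> Gamma U (\<Union>F)"
    proof (rule Int_greatest)
      show "Gamma U (\<Union>B\<in>F. A \<inter> B) \<subseteq> A"
        by (rule Gamma_least[OF AI]) auto
      have "U_ideal U (Gamma U (\<Union>F))" by (rule Gamma_ideal)
      moreover have "(\<Union>B\<in>F. A \<inter> B) \<subseteq> Gamma U (\<Union>F)"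
        using Gamma_sub[of "\<Union>F" U] by blast
      ultimately show "Gamma U (\<Union>B\<in>F. A \<inter> B) \<subseteq> Gamma U (\<Union>F)"
        by (rule Gamma_least)
    qed
    define C where "C = {x. \<forall>y. y \<le> x \<longrightarrow> y \<in> A \<longrightarrow> y \<in> J}"
    have CI: "U_ideal U C"
      unfolding U_ideal_def
    proof (intro conjI allI impI ballI)
      fix x y assume "x \<in> C" "y \<le> x" then show "y \<in> C"
        unfolding C_def using order_trans by blast
    next
      fix S assume SU: "S \<in> U" and SC: "S \<subseteq> C"
      show "join S \<in> C" unfolding C_def
      proof (intro CollectI allI impI)
        fix y assume y: "y \<le> join S" "y \<in> A"
        have "is_meet2 y (join S) y" using y by (simp add: is_meet2_def)
        then have hm: "has_meet2 y (join S)" and me: "meet2 y (join S) = y"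
          using meet2_eq[of y "join S" y] unfolding has_meet2_def by blast+
        from assms(6)[OF SU hm] me have
          H: "\<forall>t\<in>S. has_meet2 y t" "has_join ((\<lambda>t. meet2 y t) ` S)"
             "y = join ((\<lambda>t. meet2 y t) ` S)" by auto
        define M where "M = (\<lambda>t. meet2 y t) ` S"
        have MJ: "M \<subseteq> J"
        proof
          fix m assume "m \<in> M"
          then obtain t where t: "t \<in> S" "m = meet2 y t" unfolding M_def by auto
          then have "m \<le> y" "m \<le> t" using H(1) meet2_props by auto
          then have "m \<in> A" using AI y(2) unfolding U_ideal_def by blast
          moreover have "t \<in> C" using t SC by auto
          ultimately show "m \<in> J" using \<open>m \<le> t\<close> unfolding C_def by blast
        qed
        have "S \<in> U_alpha alpha" using SU assms(4) by auto
        then have Sne: "S \<noteq> {}" and Sc: "(card_of S, alpha) \<in> ordLess"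
          by (auto simp: U_alpha_def)
        have "(card_of M, card_of S) \<in> ordLeq" unfolding M_def by (rule card_of_image)
        then have "(card_of M, alpha) \<in> ordLess" using Sc ordLeq_ordLess_trans by blast
        then have "M \<in> U_alpha alpha" using Sne H(2) by (auto simp: U_alpha_def M_def)
        then have "M \<in> U_plus U" using assms(5) by auto
        then have "join M \<in> Gamma U M" by (simp add: U_plus_def)
        also have "\<dots> \<subseteq> J" by (rule Gamma_least[OF JI MJ])
        finally show "y \<in> J" using H(3) M_def by simp
      qed
    qed
    have FC: "\<Union>F \<subseteq> C"
    proof
      fix x assume "x \<in> \<Union>F"
      then obtain B where B: "B \<in> F" "x \<in> B" by auto
      then have BI: "U_ideal U B" using F by (auto simp: U_ideals_def)
      show "x \<in> C" unfolding C_def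
      proof (intro CollectI allI impI)
        fix y assume "y \<le> x" "y \<in> A"
        then have "y \<in> A \<inter> B" using BI B unfolding U_ideal_def by blast
        then show "y \<in> J" using AJ B by blast
      qed
    qed
    have "Gamma U (\<Union>F) \<subseteq> C" by (rule Gamma_least[OF CI FC])
    show "A \<inter> Gamma U (\<Union>F) \<subseteq> Gamma U (\<Union>B\<in>F. A \<inter> B)"
    proof
      fix x assume x: "x \<in> A \<inter> Gamma U (\<Union>F)"
      then have "x \<in> C" using \<open>Gamma U (\<Union>F) \<subseteq> C\<close> by blast
      then have "x \<in> J" using x unfolding C_def by blast
      then show "x \<in> Gamma U (\<Union>B\<in>F. A \<inter> B)" by (simp add: J_def)
    qed
  qed
  show ?thesis
    unfolding frame_def
  proof (intro conjI ballI allI impI)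
    fix F assume "F \<subseteq> U_ideals U"
    then show "\<exists>x. lub_in (U_ideals U) (\<subseteq>) F x" using lub_ideals by blast
  next
    fix a F assume a: "a \<in> U_ideals U" and F: "F \<subseteq> U_ideals U"
    have l1: "lub_of (U_ideals U) (\<subseteq>) F = Gamma U (\<Union>F)"
      by (rule lub_unique[OF lub_ideals[OF F]])
    have gI: "Gamma U (\<Union>F) \<in> U_ideals U" using Gamma_ideal by (simp add: U_ideals_def)
    have g1: "glb_of (U_ideals U) (\<subseteq>) {a, Gamma U (\<Union>F)} = a \<inter> Gamma U (\<Union>F)"
      by (rule glb_unique[OF glb_ideals[OF a gI]])
    have gb: "glb_of (U_ideals U) (\<subseteq>) {a, b} = a \<inter> b" if "b \<in> F" for b
      using glb_unique[OF glb_ideals[OF a]] F that by blast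
    have img: "(\<lambda>b. glb_of (U_ideals U) (\<subseteq>) {a, b}) ` F = (\<lambda>b. a \<inter> b) ` F"
      by (rule image_cong[OF refl gb])
    have ab: "a \<inter> b \<in> U_ideals U" if "b \<in> F" for b
    proof -
      have "U_ideal U (\<Inter>{a,b})"
        by (rule ideal_Inter) (use a F that in \<open>auto simp: U_ideals_def\<close>)
      then show ?thesis by (simp add: U_ideals_def)
    qed
    have F2: "(\<lambda>b. a \<inter> b) ` F \<subseteq> U_ideals U"
      using ab by blast
    have l2: "lub_of (U_ideals U) (\<subseteq>) ((\<lambda>b. a \<inter> b) ` F) = Gamma U (\<Union>((\<lambda>b. a \<inter> b) ` F))"
      by (rule lub_unique[OF lub_ideals[OF F2]])
    show "glb_of (U_ideals U) (\<subseteq>) {a, lub_of (U_ideals U) (\<subseteq>) F} =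
          lub_of (U_ideals U) (\<subseteq>) ((\<lambda>b. glb_of (U_ideals U) (\<subseteq>) {a, b}) ` F)"
      using l1 g1 img l2 dist[OF a F] by simp
  qed auto
qed

end
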